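(* Under the injective homomorphism $\psi\colon\mathrm{GD}^!\langle X\rangle\to\mathrm{ComDer}\langle X,d\rangle$ ($\psi(x)=x$, $\psi(f*g)=\psi(f)\psi(g)$, $\psi(f\star g)=d(\psi(f))\psi(g)$), the image of $\mathrm{GD}^!\langle X\rangle$ has as a linear basis the set of all monomials of $\mathrm{ComDer}\langle X,d\rangle$ (commutative monomials in the letters $d^s(x)$, $s\ge0$, $x\in X$) of weight $\le -1$.
   Context: $\mathrm{ComDer}\langle X,d\rangle$ is the free associative commutative algebra with one derivation $d$ generated by $X$, i.e. the polynomial algebra in the variables $d^s(x)$. The weight of its monomials is defined by $\mathrm{wt}(x)=-1$ for $x\in X$, $\mathrm{wt}(uv)=\mathrm{wt}(u)+\mathrm{wt}(v)$, $\mathrm{wt}(d(u))=\mathrm{wt}(u)+1$. A $\mathrm{GD}^!$-algebra is a vector space with two bilinear operations $*$ and $\star$ such that $*$ is associative and commutative, and $(x\star y)\star z-x\star(y\star z)=(x\star z)\star y-x\star(z\star y)$, $x\star(y\star z)=y\star(x\star z)$, $x\star(y*z)=(x\star y)*z$, $x\star(y*z)+y\star(x*z)=(x*y)\star z$; $\mathrm{GD}^!\langle X\rangle$ is the free one on $X$. *)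

theory Defs
  imports Complex_Main "HOL-Library.Multiset" "HOL-Library.Poly_Mapping"
begin

text \<open>Letters of ComDer: a pair (x, s) stands for d^s(x).\<close>

type_synonym 'x cd_monomial = "('x \<times> nat) multiset"
type_synonym ('x, 'k) comder = "'x cd_monomial \<Rightarrow>\<^sub>0 'k"

definition cd_scale :: "'k::field \<Rightarrow> ('x, 'k) comder \<Rightarrow> ('x, 'k) comder" where
  "cd_scale c p = Poly_Mapping.map (\<lambda>v. c * v) p"

definition cd_mon :: "'x cd_monomial \<Rightarrow> ('x, 'k::field) comder" where
  "cd_mon M = Poly_Mapping.single M 1"

text \<open>The derivation d on a monomial (Leibniz rule, d(d^s x) = d^(s+1) x),
  extended linearly.\<close>
definition cd_der_mon :: "'x cd_monomial \<Rightarrow> ('x, 'k::field) comder" where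
  "cd_der_mon M = (\<Sum>a\<in>#M. cd_mon (M - {#a#} + {#(fst a, Suc (snd a))#}))"

definition cd_der :: "('x, 'k::field) comder \<Rightarrow> ('x, 'k) comder" where
  "cd_der p = (\<Sum>M\<in>Poly_Mapping.keys p. cd_scale (Poly_Mapping.lookup p M) (cd_der_mon M))"

text \<open>Weight: wt(x) = -1, wt(uv) = wt u + wt v, wt(d u) = wt u + 1,
  so wt of d^s(x) is s - 1.\<close>
definition cd_weight :: "'x cd_monomial \<Rightarrow> int" where
  "cd_weight M = (\<Sum>a\<in>#M. int (snd a) - 1)"

text \<open>Nonassociative words in the two operations * (GDMul) and \<star> (GDStar)
  over X; they span the free GD^!-algebra GD^!<X>.\<close>
datatype 'x gd_word = GDGen 'x | GDMul "'x gd_word" "'x gd_word" | GDStar "'x gd_word" "'x gd_word"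

primrec gd_psi :: "'x gd_word \<Rightarrow> ('x, 'k::field) comder" where
  "gd_psi (GDGen x) = cd_mon {#(x, 0)#}"
| "gd_psi (GDMul f g) = gd_psi f * gd_psi g"
| "gd_psi (GDStar f g) = cd_der (gd_psi f) * gd_psi g"

definition gd_image :: "('x, 'k::field) comder set" where
  "gd_image = module.span cd_scale (range gd_psi)"

end

theory Submission
  imports Defs
begin

lemma cd_scale_eq: "cd_scale c p = Poly_Mapping.single 0 c * p"
  unfolding cd_scale_def by (rule mult_map_scale_conv_mult)

interpretation cdm: module "cd_scale :: 'k::field \<Rightarrow> ('x, 'k) comder \<Rightarrow> _"
  by standard (simp_all add: cd_scale_eq algebra_simps mult_single single_add flip: mult.assoc)

lemma lookup_cd_scale: "Poly_Mapping.lookup (cd_scale c p) M = c * Poly_Mapping.lookup p M"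
  unfolding cd_scale_def by (simp add: Poly_Mapping.map.rep_eq when_def)

lemma keys_cd_scale: "Poly_Mapping.keys (cd_scale c p) \<subseteq> Poly_Mapping.keys p"
  by (auto simp: in_keys_iff lookup_cd_scale)

lemma cd_scale_mon: "cd_scale c (cd_mon M) = Poly_Mapping.single M c"
  by (simp add: cd_scale_eq cd_mon_def mult_single)

lemma cd_scale_mult_left: "cd_scale c (a * b) = cd_scale c a * b"
  by (simp add: cd_scale_eq mult.assoc)

lemma cd_scale_mult_right: "cd_scale c (a * b) = a * cd_scale c b"
  by (simp add: cd_scale_eq mult.left_commute)

lemma cd_der_superset:
  assumes "finite K" "Poly_Mapping.keys p \<subseteq> K"
  shows "cd_der p = (\<Sum>M\<in>K. cd_scale (Poly_Mapping.lookup p M) (cd_der_mon M))"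
  unfolding cd_der_def
  by (rule sum.mono_neutral_left) (use assms in \<open>auto simp: in_keys_iff\<close>)

lemma cd_der_add: "cd_der (p + q) = cd_der p + cd_der q"
proof -
  let ?K = "Poly_Mapping.keys p \<union> Poly_Mapping.keys q"
  have "cd_der (p + q) = (\<Sum>M\<in>?K. cd_scale (Poly_Mapping.lookup (p+q) M) (cd_der_mon M))"
    by (rule cd_der_superset) (auto dest: subsetD[OF keys_add])
  also have "\<dots> = (\<Sum>M\<in>?K. cd_scale (Poly_Mapping.lookup p M) (cd_der_mon M))
     + (\<Sum>M\<in>?K. cd_scale (Poly_Mapping.lookup q M) (cd_der_mon M))"
    by (simp add: lookup_add cdm.scale_left_distrib sum.distrib)
  also have "\<dots> = cd_der p + cd_der q"
    by (simp add: cd_der_superset[symmetric])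
  finally show ?thesis .
qed

lemma cd_der_scale: "cd_der (cd_scale c p) = cd_scale c (cd_der p)"
proof -
  have "cd_der (cd_scale c p) = (\<Sum>M\<in>Poly_Mapping.keys p. cd_scale (Poly_Mapping.lookup (cd_scale c p) M) (cd_der_mon M))"
    by (rule cd_der_superset) (auto simp: keys_cd_scale)
  also have "\<dots> = cd_scale c (cd_der p)"
    by (simp add: lookup_cd_scale cd_der_def cdm.scale_sum_right)
  finally show ?thesis .
qed

lemma cd_der_zero: "cd_der 0 = 0"
  by (simp add: cd_der_def)

lemma cd_der_mon_eq: "cd_der (cd_mon M :: ('x,'k::field) comder) = cd_der_mon M"
  by (simp add: cd_der_def cd_mon_def)

lemma psi_in: "gd_psi w \<in> gd_image"
  unfolding gd_image_def by (rule cdm.span_base) simp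

lemma I_add: "a \<in> gd_image \<Longrightarrow> b \<in> gd_image \<Longrightarrow> a + b \<in> gd_image"
  unfolding gd_image_def by (rule cdm.span_add)

lemma I_diff: "a \<in> gd_image \<Longrightarrow> b \<in> gd_image \<Longrightarrow> a - b \<in> gd_image"
  unfolding gd_image_def by (rule cdm.span_diff)

lemma I_zero: "0 \<in> gd_image"
  unfolding gd_image_def by (rule cdm.span_zero)

lemma I_mul_psi:
  assumes "a \<in> gd_image" shows "a * gd_psi w \<in> (gd_image :: ('x,'k::field) comder set)"
  using assms unfolding gd_image_def
proof (induction rule: cdm.span_induct)
  case (step x)
  then obtain v where "x = gd_psi v" by auto
  then have "x * gd_psi w = gd_psi (GDMul v w)" by simp
  then show ?case by (metis cdm.span_base rangeI)
next
  case base
  show ?case unfolding cdm.subspace_def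
    by (simp add: cdm.span_zero cdm.span_add cdm.span_scale distrib_right cd_scale_mult_left[symmetric])
qed

lemma I_mul:
  assumes "a \<in> gd_image" "b \<in> gd_image" shows "a * b \<in> (gd_image :: ('x,'k::field) comder set)"
  using assms(2) unfolding gd_image_def
proof (induction rule: cdm.span_induct)
  case (step x)
  then obtain v where "x = gd_psi v" by auto
  then show ?case using I_mul_psi[OF assms(1)] by (simp add: gd_image_def)
next
  case base
  show ?case unfolding cdm.subspace_def
    by (simp add: cdm.span_zero cdm.span_add cdm.span_scale distrib_left cd_scale_mult_right[symmetric])
qed

lemma I_der_psi:
  assumes "b \<in> gd_image" shows "cd_der (gd_psi w) * b \<in> (gd_image :: ('x,'k::field) comder set)"
  using assms unfolding gd_image_def
proof (induction rule: cdm.span_induct)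
  case (step x)
  then obtain v where "x = gd_psi v" by auto
  then have "cd_der (gd_psi w) * x = gd_psi (GDStar w v)" by simp
  then show ?case by (metis cdm.span_base rangeI)
next
  case base
  show ?case unfolding cdm.subspace_def
    by (simp add: cdm.span_zero cdm.span_add cdm.span_scale distrib_left cd_scale_mult_right[symmetric])
qed

lemma I_der:
  assumes "a \<in> gd_image" "b \<in> gd_image" shows "cd_der a * b \<in> (gd_image :: ('x,'k::field) comder set)"
  using assms(1) unfolding gd_image_def
proof (induction rule: cdm.span_induct)
  case (step x)
  then obtain v where "x = gd_psi v" by auto
  then show ?case using I_der_psi[OF assms(2)] by (simp add: gd_image_def)
next
  case base
  show ?case unfolding cdm.subspace_def
    by (simp add: cdm.span_zero cdm.span_add cdm.span_scale distrib_right cd_der_add cd_der_scale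
        cd_der_zero cd_scale_mult_left[symmetric])
qed

lemma I_sum_mset:
  assumes "\<forall>a\<in>#A. f a * c \<in> gd_image"
  shows "(\<Sum>a\<in>#A. f a) * c \<in> (gd_image :: ('x,'k::field) comder set)"
  using assms by (induction A) (auto simp: distrib_right I_add I_zero)

lemma wt_empty[simp]: "cd_weight {#} = 0"
  by (simp add: cd_weight_def)

lemma wt_add_mset[simp]: "cd_weight (add_mset a A) = int (snd a) - 1 + cd_weight A"
  by (simp add: cd_weight_def)

lemma wt_union[simp]: "cd_weight (A + B) = cd_weight A + cd_weight B"
  by (simp add: cd_weight_def)

lemma wt_raise:
  assumes "a \<in># M"
  shows "cd_weight (M - {#a#} + {#(fst a, Suc (snd a))#}) = cd_weight M + 1"
proof -
  have "cd_weight M = cd_weight (add_mset a (M - {#a#}))" using assms by simp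
  then show ?thesis by simp
qed

definition wle :: "int \<Rightarrow> ('x, 'k::field) comder \<Rightarrow> bool" where
  "wle n p \<longleftrightarrow> (\<forall>M\<in>Poly_Mapping.keys p. cd_weight M \<le> n)"

lemma wle_zero: "wle n 0" by (simp add: wle_def)

lemma wle_add: "wle n p \<Longrightarrow> wle n q \<Longrightarrow> wle n (p + q)"
  unfolding wle_def using keys_add[of p q] by auto

lemma wle_scale: "wle n p \<Longrightarrow> wle n (cd_scale c p)"
  unfolding wle_def using keys_cd_scale[of c p] by auto

lemma wle_sum: "(\<And>a. a \<in> A \<Longrightarrow> wle n (f a)) \<Longrightarrow> wle n (sum f A)"
  by (induction A rule: infinite_finite_induct) (auto simp: wle_zero wle_add)

lemma wle_sum_mset: "(\<And>a. a \<in># A \<Longrightarrow> wle n (f a)) \<Longrightarrow> wle n (\<Sum>a\<in>#A. f a)"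
  by (induction A) (auto simp: wle_zero wle_add)

lemma wle_mon: "cd_weight M \<le> n \<Longrightarrow> wle n (cd_mon M)"
  by (simp add: wle_def cd_mon_def)

lemma wle_mono: "wle n p \<Longrightarrow> n \<le> m \<Longrightarrow> wle m p"
  by (auto simp: wle_def)

lemma wle_der_mon: "wle (cd_weight M + 1) (cd_der_mon M)"
  unfolding cd_der_mon_def
proof (rule wle_sum_mset)
  fix a assume "a \<in># M"
  then show "wle (cd_weight M + 1) (cd_mon (M - {#a#} + {#(fst a, Suc (snd a))#}))"
    by (intro wle_mon) (simp only: wt_raise order_refl)
qed

lemma wle_der: "wle n p \<Longrightarrow> wle (n + 1) (cd_der p)"
  unfolding cd_der_def
proof (rule wle_sum)
  fix M assume p: "wle n p" and M: "M \<in> Poly_Mapping.keys p"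
  then have "cd_weight M \<le> n" by (simp add: wle_def)
  then show "wle (n + 1) (cd_scale (Poly_Mapping.lookup p M) (cd_der_mon M))"
    by (intro wle_scale wle_mono[OF wle_der_mon]) simp
qed

lemma wle_mult: "wle n p \<Longrightarrow> wle m q \<Longrightarrow> wle (n + m) (p * q)"
  unfolding wle_def
proof
  fix K assume p: "\<forall>M\<in>Poly_Mapping.keys p. cd_weight M \<le> n" and q: "\<forall>M\<in>Poly_Mapping.keys q. cd_weight M \<le> m"
    and K: "K \<in> Poly_Mapping.keys (p * q)"
  from K keys_mult[of p q] obtain a b where "K = a + b" "a \<in> Poly_Mapping.keys p" "b \<in> Poly_Mapping.keys q"
    by blast
  with p q show "cd_weight K \<le> n + m" by (simp add: add_mono)
qed

lemma wle_psi: "wle (-1) (gd_psi w)"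
proof (induction w)
  case (GDGen x)
  then show ?case by (simp add: wle_mon)
next
  case (GDMul w1 w2)
  then show ?case using wle_mult[OF GDMul.IH] by (auto intro: wle_mono)
next
  case (GDStar w1 w2)
  then show ?case using wle_mult[OF wle_der[OF GDStar.IH(1)] GDStar.IH(2)] by simp
qed

lemma expansion: "p = (\<Sum>M\<in>Poly_Mapping.keys p. cd_scale (Poly_Mapping.lookup p M) (cd_mon M))"
  by (rule poly_mapping_eqI)
     (auto simp: cd_scale_mon lookup_sum lookup_single when_def in_keys_iff)

lemma wle_span:
  assumes "wle (-1) p"
  shows "p \<in> module.span cd_scale {cd_mon M | M. cd_weight M \<le> -1}"
  apply (subst expansion)
  apply (rule cdm.span_sum)
  apply (rule cdm.span_scale)
  apply (rule cdm.span_base)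
  using assms by (auto simp: wle_def)

lemma cd_mon_inj: "(cd_mon A :: ('x,'k::field) comder) = cd_mon B \<longleftrightarrow> A = B"
proof
  assume "(cd_mon A :: ('x,'k::field) comder) = cd_mon B"
  then have "Poly_Mapping.lookup (cd_mon A :: ('x,'k::field) comder) A = Poly_Mapping.lookup (cd_mon B :: ('x,'k::field) comder) A" by simp
  then show "A = B" by (auto simp: cd_mon_def lookup_single when_def split: if_splits)
qed simp

lemma indep: "\<not> module.dependent (cd_scale :: 'k::field \<Rightarrow> _) {cd_mon M | M :: 'x cd_monomial. cd_weight M \<le> -1}"
  unfolding cdm.dependent_explicit
proof clarsimp
  fix t and u :: "('x,'k) comder \<Rightarrow> 'k" and v
  assume t: "finite t" "t \<subseteq> {cd_mon M | M. cd_weight M \<le> -1}" and s: "(\<Sum>v\<in>t. cd_scale (u v) v) = 0"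
    and v: "v \<in> t"
  from v t obtain M where vM: "v = cd_mon M" by auto
  have "\<forall>v'\<in>t. Poly_Mapping.lookup (cd_scale (u v') v') M = (if v' = v then u v' else 0)"
  proof
    fix v' assume "v' \<in> t"
    then obtain M' where v': "v' = cd_mon M'" using t by auto
    show "Poly_Mapping.lookup (cd_scale (u v') v') M = (if v' = v then u v' else 0)"
    proof (cases "M' = M")
      case True
      then show ?thesis by (simp add: v' vM cd_scale_mon)
    next
      case False
      then have "v' \<noteq> v" by (simp add: v' vM cd_mon_inj)
      then show ?thesis using False by (simp add: v' cd_scale_mon lookup_single_not_eq)
    qed
  qed
  then have "Poly_Mapping.lookup (\<Sum>v\<in>t. cd_scale (u v) v) M = u v"
    by (simp add: lookup_sum t v)
  then show "u v = 0" using s by simp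
qed

definition sqw :: "'x cd_monomial \<Rightarrow> nat" where
  "sqw M = (\<Sum>a\<in>#M. snd a ^ 2)"

lemma sqw_empty[simp]: "sqw {#} = 0" by (simp add: sqw_def)
lemma sqw_add_mset[simp]: "sqw (add_mset a A) = snd a ^ 2 + sqw A" by (simp add: sqw_def)
lemma sqw_union[simp]: "sqw (A + B) = sqw A + sqw B" by (simp add: sqw_def)

lemma wt_ge: "cd_weight N \<ge> - int (size (filter_mset (\<lambda>a. snd a = 0) N))"
  by (induction N) auto

lemma wt_all0: "\<forall>a\<in>#N. snd a = 0 \<Longrightarrow> cd_weight N = - int (size N)"
  by (induction N) auto

lemma sqw_all0: "\<forall>a\<in>#N. snd a = 0 \<Longrightarrow> sqw N = 0"
  by (induction N) auto

lemma obtain_sub: "k \<le> size G \<Longrightarrow> \<exists>A. A \<subseteq># G \<and> size A = k"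
proof (induction G arbitrary: k)
  case empty
  then show ?case by auto
next
  case (add x G)
  show ?case
  proof (cases k)
    case 0
    then show ?thesis by auto
  next
    case (Suc k')
    with add obtain A where "A \<subseteq># G" "size A = k'" by auto
    then show ?thesis using Suc by (intro exI[of _ "add_mset x A"]) auto
  qed
qed

lemma mon_mult: "cd_mon A * cd_mon B = (cd_mon (A + B) :: ('x,'k::field) comder)"
  by (simp add: cd_mon_def mult_single)

lemma gen_in: "(cd_mon {#(x, 0)#} :: ('x,'k::field) comder) \<in> gd_image"
  using psi_in[of "GDGen x"] by simp

lemma key_step:
  assumes IH: "\<And>M'. size M' < n \<Longrightarrow> cd_weight M' \<le> -1 \<Longrightarrow> (cd_mon M' :: ('x,'k::field) comder) \<in> gd_image"
  shows "size M = n \<Longrightarrow> cd_weight M \<le> -1 \<Longrightarrow> (cd_mon M :: ('x,'k) comder) \<in> gd_image"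
proof (induction "sqw M" arbitrary: M rule: less_induct)
  case less
  define G where "G = filter_mset (\<lambda>a. snd a = 0) M"
  have wG: "cd_weight M \<ge> - int (size G)" unfolding G_def by (rule wt_ge)
  consider "cd_weight M \<le> -2" | "cd_weight M = -1" using less.prems by linarith
  then show ?case
  proof cases
    case 1
    then have "G \<noteq> {#}" using wG by auto
    then obtain z where z: "z \<in># G" by blast
    then have zM: "z \<in># M" and z0: "snd z = 0" by (auto simp: G_def)
    define M' where "M' = M - {#z#}"
    have Meq: "M = add_mset z M'" using zM by (simp add: M'_def)
    have "cd_weight M = cd_weight M' - 1" using Meq z0 by simp
    then have w': "cd_weight M' \<le> -1" using 1 by linarith
    have "size M = Suc (size M')" using Meq by simp
    then have "size M' < n" using less.prems(1) by simp
    then have I1: "(cd_mon M' :: ('x,'k) comder) \<in> gd_image" using IH[OF _ w'] by simp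
    have zz: "z = (fst z, 0)" using z0 by (metis prod.collapse)
    have I2: "(cd_mon {#z#} :: ('x,'k) comder) \<in> gd_image" by (subst zz) (rule gen_in)
    have "cd_mon M = (cd_mon {#z#} * cd_mon M' :: ('x,'k) comder)"
      by (simp add: mon_mult Meq)
    then show ?thesis using I_mul[OF I2 I1] by simp
  next
    case 2
    show ?thesis
    proof (cases "\<forall>a\<in>#M. snd a = 0")
      case True
      then have "size M = 1" using wt_all0[OF True] 2 by simp
      then obtain a where a: "M = {#a#}" using size_1_singleton_mset by blast
      then have "snd a = 0" using True by simp
      then obtain x where "a = (x, 0)" by (cases a) auto
      then show ?thesis using a gen_in[of x] by simp
    next
      case False
      then obtain y s where yM: "(y, s) \<in># M" and s: "s \<ge> 1" by auto
      define R where "R = M - {#(y, s)#}"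
      have MR: "M = add_mset (y, s) R" using yM by (simp add: R_def)
      have wR: "cd_weight R = - int s" using 2 MR by simp
      have "int (size (filter_mset (\<lambda>a. snd a = 0) R)) \<ge> int s" using wt_ge[of R] wR by simp
      then have "s - 1 \<le> size (filter_mset (\<lambda>a. snd a = 0) R)" by simp
      then obtain A where A: "A \<subseteq># filter_mset (\<lambda>a. snd a = 0) R" and sA: "size A = s - 1"
        using obtain_sub by blast
      have AR: "A \<subseteq># R" using A multiset_filter_subset subset_mset.order_trans by blast
      have A0: "\<forall>a\<in>#A. snd a = 0" using A by (auto dest: mset_subset_eqD)
      define B where "B = R - A"
      have RAB: "R = A + B" using AR by (simp add: B_def)
      have wA: "cd_weight A = - int (s - 1)" using wt_all0[OF A0] sA by simp
      have wB: "cd_weight B = -1" using wR wA RAB s by simp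
      define u where "u = add_mset (y, s - 1) A"
      have wu: "cd_weight u = -1" using wA s by (simp add: u_def)
      have Bne: "B \<noteq> {#}" using wB by auto
      then have sB: "size B \<ge> 1" by (simp add: Suc_le_eq nonempty_has_size)
      have sM: "size M = s + size B" using MR RAB sA s by simp
      have su: "size u = s" using sA s by (simp add: u_def)
      have uI: "(cd_mon u :: ('x,'k) comder) \<in> gd_image"
        using IH[of u] wu su sM sB less by simp
      have BI: "(cd_mon B :: ('x,'k) comder) \<in> gd_image"
        using IH[of B] wB sM s less by simp
      have DI: "cd_der (cd_mon u :: ('x,'k) comder) * cd_mon B \<in> gd_image"
        by (rule I_der[OF uI BI])
      define f where "f = (\<lambda>a. cd_mon (u - {#a#} + {#(fst a, Suc (snd a))#}) :: ('x,'k) comder)"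
      have "cd_der (cd_mon u :: ('x,'k) comder) = f (y, s - 1) + (\<Sum>a\<in>#A. f a)"
        by (simp add: cd_der_mon_eq cd_der_mon_def f_def u_def)
      also have "f (y, s - 1) = cd_mon (add_mset (y, s) A)"
        using s by (simp add: f_def u_def)
      finally have Deq: "cd_der (cd_mon u :: ('x,'k) comder) = cd_mon (add_mset (y, s) A) + (\<Sum>a\<in>#A. f a)" .
      have Meq: "cd_mon (add_mset (y, s) A) * cd_mon B = (cd_mon M :: ('x,'k) comder)"
        by (simp add: mon_mult MR RAB)
      have corr: "\<forall>a\<in>#A. f a * cd_mon B \<in> gd_image"
      proof
        fix a assume aA: "a \<in># A"
        then have a0: "snd a = 0" using A0 by auto
        have s2: "s \<ge> 2" using aA sA s by (cases "s - 1") auto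
        have au: "a \<in># u" using aA by (simp add: u_def)
        define N where "N = u - {#a#} + {#(fst a, Suc (snd a))#} + B"
        have fN: "f a * cd_mon B = cd_mon N" by (simp add: f_def N_def mon_mult)
        have u_eq: "u = add_mset a (u - {#a#})" using au by simp
        have "sqw u = sqw (u - {#a#})" using u_eq a0
          by (metis add_0 power_zero_numeral sqw_add_mset)
        then have sqN: "sqw N = sqw u + 1 + sqw B" using a0 by (simp add: N_def)
        have squ: "sqw u = (s - 1)^2" using sqw_all0[OF A0] by (simp add: u_def)
        have sqM: "sqw M = s^2 + sqw B" using sqw_all0[OF A0] by (simp add: MR RAB)
        have "(s - 1)^2 + 1 < s^2" using s2
        proof -
          obtain t where t: "s = Suc (Suc t)" using s2 by (metis add_2_eq_Suc le_Suc_ex)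
          show ?thesis by (simp add: t power2_eq_square)
        qed
        then have lt: "sqw N < sqw M" using sqN squ sqM by simp
        have "cd_weight (u - {#a#} + {#(fst a, Suc (snd a))#}) = cd_weight u + 1"
          using au by (rule wt_raise)
        then have wN: "cd_weight N = -1" using wu wB by (simp add: N_def)
        have "size (u - {#a#} + {#(fst a, Suc (snd a))#}) = size u"
          using size_add_mset[of a "u - {#a#}"] u_eq by simp
        then have szN: "size N = n" using su sM less by (simp add: N_def)
        show "f a * cd_mon B \<in> gd_image" using less(1)[OF lt szN] wN fN by simp
      qed
      have SI: "(\<Sum>a\<in>#A. f a) * cd_mon B \<in> gd_image" by (rule I_sum_mset[OF corr])
      have "(cd_mon M :: ('x,'k) comder) = cd_der (cd_mon u) * cd_mon B - (\<Sum>a\<in>#A. f a) * cd_mon B"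
        by (simp add: Deq distrib_right Meq)
      then show ?thesis using I_diff[OF DI SI] by simp
  qed
qed

qed

lemma key: "cd_weight M \<le> -1 \<Longrightarrow> (cd_mon M :: ('x,'k::field) comder) \<in> gd_image"
proof (induction "size M" arbitrary: M rule: less_induct)
  case less
  show ?case by (rule key_step[OF _ refl less.prems]) (use less.hyps in blast)
qed

theorem mainTheorem9:
  shows "module.span (cd_scale :: 'k::field_char_0 \<Rightarrow> _) {cd_mon M | M :: 'x cd_monomial. cd_weight M \<le> -1}
           = (gd_image :: ('x, 'k) comder set)
         \<and> \<not> module.dependent (cd_scale :: 'k \<Rightarrow> _) {cd_mon M | M :: 'x cd_monomial. cd_weight M \<le> -1}"
proof
  let ?W = "{cd_mon M | M :: 'x cd_monomial. cd_weight M \<le> -1} :: ('x,'k) comder set"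
  have sub: "module.subspace cd_scale (gd_image :: ('x,'k) comder set)"
    unfolding gd_image_def by (rule cdm.subspace_span)
  have "?W \<subseteq> gd_image" using key by blast
  then have "module.span cd_scale ?W \<subseteq> gd_image"
    using sub by (rule cdm.span_minimal)
  moreover have "gd_image \<subseteq> module.span cd_scale ?W"
    unfolding gd_image_def
    by (rule cdm.span_minimal) (auto intro: wle_span wle_psi)
  ultimately show "module.span cd_scale ?W = gd_image" by blast
  show "\<not> module.dependent cd_scale ?W" by (rule indep)
qed

end
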